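(* For all closed terms $t_0,t_1$ of $\lambda_S$, if $t_0\equiv^E_p t_1$ then $t_0\approx^p_{\emptyset}t_1$.
   Context: Terms of $\lambda_S$: $t ::= x \mid \lambda x.t \mid t\,t \mid \mathcal{S}k.t \mid \langle t\rangle$ (shift binds $k$; $\langle\cdot\rangle$ is reset), up to $\alpha$-conversion. Values $v::=\lambda x.t$. Pure contexts $E ::= \Box \mid v\,E \mid E\,t$; evaluation contexts $F ::= \Box \mid v\,F \mid F\,t \mid \langle F\rangle$. Reduction: $F[(\lambda x.t)v]\to F[t\{v/x\}]$; $F[\langle E[\mathcal Sk.t]\rangle]\to F[\langle t\{\lambda x.\langle E[x]\rangle/k\}\rangle]$ ($x\notin\mathrm{fv}(E)$); $F[\langle v\rangle]\to F[v]$; $\to^*$ reflexive-transitive closure; $t\Downarrow t'$ iff $t\to^*t'$ and $t'$ irreducible. A program is a term $\langle t\rangle$ (ranged over by $p$). Closures: for $R$ a relation on closed terms, $\widetilde R$ is the smallest relation containing $R$, all $(x,x)$, closed under all term constructors, restricted to closed terms; $\widehat R$ is the smallest relation on closed evaluation contexts with $\Box\widehat R\Box$, $v_0F_0\widehat Rv_1F_1$ if $F_0\widehat RF_1,v_0\widetilde Rv_1$; $F_0t_0\widehat RF_1t_1$ if $F_0\widehat RF_1,t_0\widetilde Rt_1$; $\langle F_0\rangle\widehat R\langle F_1\rangle$ if $F_0\widehat RF_1$. Environmental bisimilarity for programs: an environment $\mathcal E$ is a relation on closed values; an environmental relation $\mathcal X$ is a set of environments and triples $(\mathcal E,t_0,t_1)$,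 $t_0,t_1$ closed, written $t_0\mathcal X_{\mathcal E}t_1$. $\mathcal X$ is an environmental bisimulation for programs if (1) if $t_0\mathcal X_{\mathcal E}t_1$ and $t_0,t_1$ are not both programs, then for all pure $E_0\widehat{\mathcal E}E_1$, $\langle E_0[t_0]\rangle\mathcal X_{\mathcal E}\langle E_1[t_1]\rangle$; (2) if $p_0\mathcal X_{\mathcal E}p_1$: (a) $p_0\to p_0'$ (a program) implies $p_1\to^*p_1'$ (a program) with $p_0'\mathcal X_{\mathcal E}p_1'$; (b) $p_0\to v_0$ implies $p_1\to^*v_1$ and $\{(v_0,v_1)\}\cup\mathcal E\in\mathcal X$; (c) symmetric conditions for $p_1$; (3) for $\mathcal E\in\mathcal X$, $(\lambda x.t_0)\mathcal E(\lambda x.t_1)$ and $v_0\widetilde{\mathcal E}v_1$ imply $t_0\{v_0/x\}\mathcal X_{\mathcal E}t_1\{v_1/x\}$. $\approx^p$ is the largest such relation; $t_0\approx^p_{\mathcal E}t_1$ means $(\mathcal E,t_0,t_1)\in\approx^p$. Evaluation-context equivalence: for closed $t_0,t_1$, $t_0\equiv^E_pt_1$ iff for every closed evaluation context $F$, $\langle F[t_0]\rangle\Downarrow$ a value iff $\langle F[t_1]\rangle\Downarrow$ a value. *)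

theory Defs
  imports Main
begin

section \<open>Terms of lambda_S (locally nameless / de Bruijn, so alpha-equivalence is equality)\<close>

text \<open>Shift t binds index 0 in t (the continuation variable k); Lam t binds index 0 in t.\<close>
datatype trm = Var nat | Lam trm | App trm trm | Shift trm | Reset trm

fun closed_at :: "nat \<Rightarrow> trm \<Rightarrow> bool" where
  "closed_at n (Var i) = (i < n)"
| "closed_at n (Lam t) = closed_at (Suc n) t"
| "closed_at n (App t u) = (closed_at n t \<and> closed_at n u)"
| "closed_at n (Shift t) = closed_at (Suc n) t"
| "closed_at n (Reset t) = closed_at n t"

definition closed :: "trm \<Rightarrow> bool" where
  "closed t = closed_at 0 t"

fun lift :: "nat \<Rightarrow> trm \<Rightarrow> trm" where
  "lift k (Var i) = (if i < k then Var i else Var (Suc i))"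
| "lift k (Lam t) = Lam (lift (Suc k) t)"
| "lift k (App t u) = App (lift k t) (lift k u)"
| "lift k (Shift t) = Shift (lift (Suc k) t)"
| "lift k (Reset t) = Reset (lift k t)"

fun subst :: "nat \<Rightarrow> trm \<Rightarrow> trm \<Rightarrow> trm" where
  "subst k s (Var i) = (if i = k then s else if k < i then Var (i - 1) else Var i)"
| "subst k s (Lam t) = Lam (subst (Suc k) (lift 0 s) t)"
| "subst k s (App t u) = App (subst k s t) (subst k s u)"
| "subst k s (Shift t) = Shift (subst (Suc k) (lift 0 s) t)"
| "subst k s (Reset t) = Reset (subst k s t)"

definition is_val :: "trm \<Rightarrow> bool" where
  "is_val t = (\<exists>b. t = Lam b)"

definition is_prog :: "trm \<Rightarrow> bool" where
  "is_prog t = (\<exists>s. t = Reset s)"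

datatype ctx = Hole | CArgR trm ctx | CAppL ctx trm | CReset ctx

fun plug :: "ctx \<Rightarrow> trm \<Rightarrow> trm" where
  "plug Hole t = t"
| "plug (CArgR v F) t = App v (plug F t)"
| "plug (CAppL F u) t = App (plug F t) u"
| "plug (CReset F) t = Reset (plug F t)"

fun liftc :: "nat \<Rightarrow> ctx \<Rightarrow> ctx" where
  "liftc k Hole = Hole"
| "liftc k (CArgR v F) = CArgR (lift k v) (liftc k F)"
| "liftc k (CAppL F u) = CAppL (liftc k F) (lift k u)"
| "liftc k (CReset F) = CReset (liftc k F)"

fun evctx :: "ctx \<Rightarrow> bool" where
  "evctx Hole = True"
| "evctx (CArgR v F) = (is_val v \<and> evctx F)"
| "evctx (CAppL F u) = evctx F"
| "evctx (CReset F) = evctx F"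

fun pure :: "ctx \<Rightarrow> bool" where
  "pure Hole = True"
| "pure (CArgR v F) = (is_val v \<and> pure F)"
| "pure (CAppL F u) = pure F"
| "pure (CReset F) = False"

fun closed_ctx :: "ctx \<Rightarrow> bool" where
  "closed_ctx Hole = True"
| "closed_ctx (CArgR v F) = (closed v \<and> closed_ctx F)"
| "closed_ctx (CAppL F u) = (closed_ctx F \<and> closed u)"
| "closed_ctx (CReset F) = closed_ctx F"

inductive red :: "trm \<Rightarrow> trm \<Rightarrow> bool" where
  beta: "evctx F \<Longrightarrow> is_val v \<Longrightarrow>
    red (plug F (App (Lam t) v)) (plug F (subst 0 v t))"
| shift: "evctx F \<Longrightarrow> pure E \<Longrightarrow>
    red (plug F (Reset (plug E (Shift t))))
        (plug F (Reset (subst 0 (Lam (Reset (plug (liftc 0 E) (Var 0)))) t)))"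
| reset: "evctx F \<Longrightarrow> is_val v \<Longrightarrow> red (plug F (Reset v)) (plug F v)"

abbreviation reds :: "trm \<Rightarrow> trm \<Rightarrow> bool" where
  "reds \<equiv> red\<^sup>*\<^sup>*"

definition evals :: "trm \<Rightarrow> trm \<Rightarrow> bool" where
  "evals t t' = (reds t t' \<and> \<not> (\<exists>u. red t' u))"

definition evals_to_value :: "trm \<Rightarrow> bool" where
  "evals_to_value t = (\<exists>v. evals t v \<and> is_val v)"

definition ctx_equiv_p :: "trm \<Rightarrow> trm \<Rightarrow> bool" where
  "ctx_equiv_p t0 t1 = (\<forall>F. evctx F \<and> closed_ctx F \<longrightarrow>
      (evals_to_value (Reset (plug F t0)) \<longleftrightarrow> evals_to_value (Reset (plug F t1))))"

inductive term_cl :: "(trm \<times> trm) set \<Rightarrow> trm \<Rightarrow> trm \<Rightarrow> bool" for R where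
  base: "(a, b) \<in> R \<Longrightarrow> term_cl R a b"
| var: "term_cl R (Var i) (Var i)"
| lam: "term_cl R t t' \<Longrightarrow> term_cl R (Lam t) (Lam t')"
| app: "term_cl R t t' \<Longrightarrow> term_cl R u u' \<Longrightarrow> term_cl R (App t u) (App t' u')"
| sft: "term_cl R t t' \<Longrightarrow> term_cl R (Shift t) (Shift t')"
| rst: "term_cl R t t' \<Longrightarrow> term_cl R (Reset t) (Reset t')"

definition tilde :: "(trm \<times> trm) set \<Rightarrow> trm \<Rightarrow> trm \<Rightarrow> bool" where
  "tilde R t t' = (term_cl R t t' \<and> closed t \<and> closed t')"

inductive hat :: "(trm \<times> trm) set \<Rightarrow> ctx \<Rightarrow> ctx \<Rightarrow> bool" for R where
  hole: "hat R Hole Hole"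
| argr: "hat R F0 F1 \<Longrightarrow> is_val v0 \<Longrightarrow> is_val v1 \<Longrightarrow> tilde R v0 v1 \<Longrightarrow>
         hat R (CArgR v0 F0) (CArgR v1 F1)"
| appl: "hat R F0 F1 \<Longrightarrow> tilde R t0 t1 \<Longrightarrow> hat R (CAppL F0 t0) (CAppL F1 t1)"
| rst: "hat R F0 F1 \<Longrightarrow> hat R (CReset F0) (CReset F1)"

type_synonym env = "(trm \<times> trm) set"

text \<open>An environmental relation is a set of environments (Env E) and triples (Tri E t0 t1).\<close>
datatype envrel_elem = Env env | Tri env trm trm

definition is_env :: "env \<Rightarrow> bool" where
  "is_env E = (\<forall>(v0, v1) \<in> E. is_val v0 \<and> is_val v1 \<and> closed v0 \<and> closed v1)"

definition env_rel :: "envrel_elem set \<Rightarrow> bool" where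
  "env_rel X = ((\<forall>E. Env E \<in> X \<longrightarrow> is_env E) \<and>
     (\<forall>E t0 t1. Tri E t0 t1 \<in> X \<longrightarrow> is_env E \<and> closed t0 \<and> closed t1))"

definition env_bisim_p :: "envrel_elem set \<Rightarrow> bool" where
  "env_bisim_p X = (env_rel X \<and>
    \<comment> \<open>(1)\<close>
    (\<forall>E t0 t1. Tri E t0 t1 \<in> X \<and> \<not> (is_prog t0 \<and> is_prog t1) \<longrightarrow>
       (\<forall>E0 E1. pure E0 \<and> pure E1 \<and> hat E E0 E1 \<longrightarrow>
          Tri E (Reset (plug E0 t0)) (Reset (plug E1 t1)) \<in> X)) \<and>
    \<comment> \<open>(2)\<close>
    (\<forall>E p0 p1. Tri E p0 p1 \<in> X \<and> is_prog p0 \<and> is_prog p1 \<longrightarrow>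
       (\<forall>p0'. red p0 p0' \<and> is_prog p0' \<longrightarrow>
          (\<exists>p1'. reds p1 p1' \<and> is_prog p1' \<and> Tri E p0' p1' \<in> X)) \<and>
       (\<forall>v0. red p0 v0 \<and> is_val v0 \<longrightarrow>
          (\<exists>v1. reds p1 v1 \<and> is_val v1 \<and> Env ({(v0, v1)} \<union> E) \<in> X)) \<and>
       (\<forall>p1'. red p1 p1' \<and> is_prog p1' \<longrightarrow>
          (\<exists>p0'. reds p0 p0' \<and> is_prog p0' \<and> Tri E p0' p1' \<in> X)) \<and>
       (\<forall>v1. red p1 v1 \<and> is_val v1 \<longrightarrow>
          (\<exists>v0. reds p0 v0 \<and> is_val v0 \<and> Env ({(v0, v1)} \<union> E) \<in> X))) \<and>
    \<comment> \<open>(3)\<close>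
    (\<forall>E t0 t1 v0 v1. Env E \<in> X \<and> (Lam t0, Lam t1) \<in> E \<and>
        is_val v0 \<and> is_val v1 \<and> tilde E v0 v1 \<longrightarrow>
       Tri E (subst 0 v0 t0) (subst 0 v1 t1) \<in> X))"

definition env_bisimilar_p :: "envrel_elem set" where
  "env_bisimilar_p = \<Union>{X. env_bisim_p X}"

definition bisim_p :: "env \<Rightarrow> trm \<Rightarrow> trm \<Rightarrow> bool" where
  "bisim_p E t0 t1 = (Tri E t0 t1 \<in> env_bisimilar_p)"

end

theory Submission imports Defs begin

lemma subst_lift: "subst k s (lift k t) = t"
  by (induction t arbitrary: k s) auto

lemma lift_closed: "closed_at n t \<Longrightarrow> n \<le> k \<Longrightarrow> lift k t = t"
  by (induction t arbitrary: n k) auto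

lemma subst_closed: "closed_at n t \<Longrightarrow> n \<le> k \<Longrightarrow> subst k s t = t"
  by (induction t arbitrary: n k s) auto

lemma closed_mono: "closed_at n t \<Longrightarrow> n \<le> m \<Longrightarrow> closed_at m t"
  by (induction t arbitrary: n m) auto

lemma closed_lift: "closed_at n t \<Longrightarrow> closed_at (Suc n) (lift k t)"
  by (induction t arbitrary: n k) auto

lemma closed_subst: "closed_at (Suc m) t \<Longrightarrow> k \<le> m \<Longrightarrow> closed v \<Longrightarrow> closed_at m (subst k v t)"
proof (induction t arbitrary: m k)
  case (Var x)
  then show ?case using closed_mono[of 0 v m] by (auto simp: closed_def)
next
  case (Lam t)
  then show ?case using lift_closed[of 0 v 0] by (auto simp: closed_def)
next
  case (Shift t)
  then show ?case using lift_closed[of 0 v 0] by (auto simp: closed_def)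
qed auto

lemma closed_subst_rev: "closed_at m (subst k v c) \<Longrightarrow> k \<le> m \<Longrightarrow> closed_at (Suc m) c"
proof (induction c arbitrary: m k v)
  case (Var x)
  then show ?case by (auto split: if_splits)
qed auto

fun cca :: "nat \<Rightarrow> ctx \<Rightarrow> bool" where
  "cca n Hole = True"
| "cca n (CArgR v F) = (closed_at n v \<and> cca n F)"
| "cca n (CAppL F u) = (cca n F \<and> closed_at n u)"
| "cca n (CReset F) = cca n F"

lemma closed_plug: "closed_at n (plug F t) = (cca n F \<and> closed_at n t)"
  by (induction F) auto

lemma cca0: "closed_ctx F = cca 0 F"
  by (induction F) (auto simp: closed_def)

lemma cca_liftc: "cca n F \<Longrightarrow> cca (Suc n) (liftc k F)"
  by (induction F) (auto intro: closed_lift)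

lemma red_closed: "red t u \<Longrightarrow> closed t \<Longrightarrow> closed u"
proof (induction rule: red.induct)
  case (beta F v t)
  then show ?case by (auto simp: closed_def closed_plug intro!: closed_subst)
next
  case (shift F E t)
  then show ?case
    by (auto simp: closed_def closed_plug intro!: closed_subst cca_liftc)
next
  case (reset F v)
  then show ?case by (auto simp: closed_def closed_plug)
qed

lemma reds_closed: "reds t u \<Longrightarrow> closed t \<Longrightarrow> closed u"
  by (induction rule: rtranclp_induct) (auto intro: red_closed)

fun comp :: "ctx \<Rightarrow> ctx \<Rightarrow> ctx" where
  "comp Hole G = G"
| "comp (CArgR v F) G = CArgR v (comp F G)"
| "comp (CAppL F u) G = CAppL (comp F G) u"
| "comp (CReset F) G = CReset (comp F G)"

lemma plug_comp: "plug (comp F G) t = plug F (plug G t)"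
  by (induction F) auto

lemma evctx_comp: "evctx F \<Longrightarrow> evctx G \<Longrightarrow> evctx (comp F G)"
  by (induction F) auto

lemma red_ctx: "red t t' \<Longrightarrow> evctx F \<Longrightarrow> red (plug F t) (plug F t')"
proof (induction rule: red.induct)
  case (beta G v t)
  then show ?case using red.beta[of "comp F G" v t] by (simp add: plug_comp evctx_comp)
next
  case (shift G E t)
  then show ?case using red.shift[of "comp F G" E t] by (simp add: plug_comp evctx_comp)
next
  case (reset G v)
  then show ?case using red.reset[of "comp F G" v] by (simp add: plug_comp evctx_comp)
qed

lemma reds_ctx: "reds t t' \<Longrightarrow> evctx F \<Longrightarrow> reds (plug F t) (plug F t')"
  by (induction rule: rtranclp_induct) (auto intro: red_ctx rtranclp.rtrancl_into_rtrancl)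

fun sdec :: "trm \<Rightarrow> (ctx \<times> trm) option" where
  "sdec (Shift b) = Some (Hole, b)"
| "sdec (App t u) = (if is_val t then (case sdec u of Some (E,b) \<Rightarrow> Some (CArgR t E, b) | None \<Rightarrow> None)
     else (case sdec t of Some (E,b) \<Rightarrow> Some (CAppL E u, b) | None \<Rightarrow> None))"
| "sdec _ = None"

fun step :: "trm \<Rightarrow> trm option" where
  "step (App t u) = (if is_val t then (if is_val u then (case t of Lam b \<Rightarrow> Some (subst 0 u b) | _ \<Rightarrow> None)
      else map_option (App t) (step u)) else map_option (\<lambda>t'. App t' u) (step t))"
| "step (Reset s) = (if is_val s then Some s else (case step s of Some s' \<Rightarrow> Some (Reset s')
      | None \<Rightarrow> (case sdec s of Some (E,b) \<Rightarrow> Some (Reset (subst 0 (Lam (Reset (plug (liftc 0 E) (Var 0)))) b))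
                 | None \<Rightarrow> None)))"
| "step _ = None"

lemma plug_Lam[simp]: "(plug F t = Lam b) = (F = Hole \<and> t = Lam b)"
  by (cases F) auto

lemma val_plug: "is_val (plug F t) \<Longrightarrow> F = Hole \<and> is_val t"
  by (cases F) (auto simp: is_val_def)

lemma sdec_plug: "pure E \<Longrightarrow> sdec (plug E (Shift b)) = Some (E, b)"
  by (induction E) (auto dest: val_plug simp: is_val_def)

lemma step_plug_shift: "pure E \<Longrightarrow> step (plug E (Shift b)) = None"
  by (induction E) (auto dest: val_plug simp: is_val_def)

lemma step_ctx: "step r = Some r' \<Longrightarrow> \<not> is_val r \<Longrightarrow> evctx F \<Longrightarrow> step (plug F r) = Some (plug F r')"
  by (induction F) (auto dest: val_plug)

lemma red_step: "red t u \<Longrightarrow> step t = Some u"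
proof (induction rule: red.induct)
  case (beta F v t)
  then show ?case by (intro step_ctx) (auto simp: is_val_def)
next
  case (shift F E t)
  then show ?case by (intro step_ctx) (auto simp: is_val_def sdec_plug step_plug_shift dest: val_plug)
next
  case (reset F v)
  then show ?case by (intro step_ctx) (auto simp: is_val_def)
qed

lemma sdec_Some: "sdec s = Some (E, b) \<Longrightarrow> pure E \<and> s = plug E (Shift b)"
  by (induction s arbitrary: E b rule: sdec.induct) (auto split: if_splits option.splits)

lemma step_red: "step t = Some u \<Longrightarrow> red t u"
proof (induction t arbitrary: u rule: step.induct)
  case (1 t u')
  show ?case
  proof (cases "is_val t")
    case True
    show ?thesis
    proof (cases "is_val u'")
      case True
      with \<open>is_val t\<close> 1(3) show ?thesis
        using red.beta[of Hole u'] by (auto simp: is_val_def)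
    next
      case False
      with \<open>is_val t\<close> 1 show ?thesis
        using red_ctx[of _ _ "CArgR t Hole"] by auto
    qed
  next
    case False
    with 1 show ?thesis using red_ctx[of _ _ "CAppL Hole u'"] by auto
  qed
next
  case (2 s u)
  show ?case
  proof (cases "is_val s")
    case True
    with 2 show ?thesis using red.reset[of Hole s] by auto
  next
    case False
    show ?thesis
    proof (cases "step s")
      case (Some s')
      with False 2 show ?thesis using red_ctx[of _ _ "CReset Hole"] by auto
    next
      case None
      with False 2 show ?thesis using red.shift[of Hole]
        by (auto split: option.splits dest!: sdec_Some)
    qed
  qed
qed auto

lemma red_det: "red t u \<Longrightarrow> red t u' \<Longrightarrow> u = u'"
  by (metis option.inject red_step)

lemma val_irred: "is_val v \<Longrightarrow> \<not> red v u"
  by (auto simp: is_val_def dest!: red_step)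

lemma reds_det: "reds a b \<Longrightarrow> reds a c \<Longrightarrow> \<not> (\<exists>u. red c u) \<Longrightarrow> reds b c"
proof (induction arbitrary: rule: converse_rtranclp_induct)
  case base
  then show ?case by simp
next
  case (step y z)
  from step.prems(1) show ?case
  proof (cases rule: converse_rtranclpE)
    case base
    with step show ?thesis by blast
  next
    case (step w)
    with \<open>red y z\<close> have "w = z" using red_det by blast
    with step show ?thesis using \<open>reds z c \<Longrightarrow> _ \<Longrightarrow> _\<close> \<open>\<not> (\<exists>u. red c u)\<close> by blast
  qed
qed

lemma ev_reds: "reds a b \<Longrightarrow> evals_to_value a = evals_to_value b"
  unfolding evals_to_value_def evals_def
  using reds_det by (meson rtranclp_trans)

lemma prog_red: "red (Reset p) u \<Longrightarrow> is_prog p \<Longrightarrow> \<exists>p'. red p p' \<and> u = Reset p'"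
proof -
  assume r: "red (Reset p) u" and "is_prog p"
  then obtain s where p: "p = Reset s" by (auto simp: is_prog_def)
  have st: "step (Reset p) = Some u" using r red_step by blast
  have nv: "\<not> is_val p" "sdec p = None" using p by (auto simp: is_val_def)
  have st2: "step (Reset p) = (case step p of Some s' \<Rightarrow> Some (Reset s') | None \<Rightarrow> None)"
    unfolding step.simps(2)[of p] using nv by (simp split: option.split)
  have "step p \<noteq> None" using st st2 by (auto split: option.splits simp del: step.simps)
  then obtain p' where sp: "step p = Some p'" by auto
  then have "u = Reset p'" using st st2 by (auto simp del: step.simps)
  then show ?thesis using sp step_red by blast
qed

lemma prog_red2: "red p u \<Longrightarrow> is_prog p \<Longrightarrow> is_prog u \<or> is_val u"
proof -
  assume r: "red p u" and "is_prog p"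
  then obtain s where p: "p = Reset s" by (auto simp: is_prog_def)
  have "step p = Some u" using r red_step by blast
  then show ?thesis using p by (auto simp: is_prog_def split: option.splits if_splits)
qed

lemma ev_prog_aux: "reds x w \<Longrightarrow> is_val w \<Longrightarrow> x = Reset p \<Longrightarrow> is_prog p \<or> is_val p \<Longrightarrow> \<exists>v. reds p v \<and> is_val v"
proof (induction arbitrary: p rule: converse_rtranclp_induct)
  case base
  then show ?case by (auto simp: is_val_def)
next
  case (step y z)
  show ?case
  proof (cases "is_val p")
    case True then show ?thesis by blast
  next
    case False
    with step have pp: "is_prog p" by blast
    then obtain p' where "red p p'" "z = Reset p'" using prog_red step by blast
    moreover have "is_prog p' \<or> is_val p'" using prog_red2 pp \<open>red p p'\<close> by blast
    ultimately obtain v where "reds p' v" "is_val v" using step by blast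
    then show ?thesis using \<open>red p p'\<close> by (meson converse_rtranclp_into_rtranclp)
  qed
qed

lemma ev_prog: "evals_to_value (Reset p) \<Longrightarrow> is_prog p \<Longrightarrow> \<exists>v. reds p v \<and> is_val v"
  unfolding evals_to_value_def evals_def using ev_prog_aux by blast


lemma term_cl_empty: "term_cl {} a b \<Longrightarrow> a = b"
  by (induction rule: term_cl.induct) auto

lemma hat_props: "hat E F0 F1 \<Longrightarrow> evctx F0 \<and> evctx F1 \<and> cca 0 F0 \<and> cca 0 F1"
  by (induction rule: hat.induct) (auto simp: tilde_def closed_def)

lemma hat_empty: "hat {} F0 F1 \<Longrightarrow> F0 = F1"
  by (induction rule: hat.induct) (auto simp: tilde_def dest: term_cl_empty)

lemma hat_plug: "hat E F0 F1 \<Longrightarrow> tilde E a b \<Longrightarrow> tilde E (plug F0 a) (plug F1 b)"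
proof (induction rule: hat.induct)
  case (argr F0 F1 v0 v1)
  then show ?case by (auto simp: tilde_def closed_def intro: term_cl.app)
next
  case (appl F0 F1 t0 t1)
  then show ?case by (auto simp: tilde_def closed_def intro: term_cl.app)
next
  case (rst F0 F1)
  then show ?case by (auto simp: tilde_def closed_def intro: term_cl.rst)
qed simp

lemma hat_comp: "hat E F0 F1 \<Longrightarrow> hat E G0 G1 \<Longrightarrow> hat E (comp F0 G0) (comp F1 G1)"
  by (induction rule: hat.induct) (auto intro: hat.intros)

lemma abstr:
  assumes env: "is_env E" and c0: "closed v0" and c1: "closed v1"
  shows "term_cl (insert (v0,v1) E) s0 s1 \<Longrightarrow>
    \<exists>c0 c1. term_cl E c0 c1 \<and> subst n v0 c0 = s0 \<and> subst n v1 c1 = s1"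
proof (induction arbitrary: n rule: term_cl.induct)
  case (base a b)
  show ?case
  proof (cases "(a,b) = (v0,v1)")
    case True
    then show ?thesis by (intro exI[of _ "Var n"]) (auto intro: term_cl.var)
  next
    case False
    with base have "(a,b) \<in> E" by auto
    with env have "closed a" "closed b" by (auto simp: is_env_def)
    then show ?thesis using \<open>(a,b) \<in> E\<close>
      by (intro exI[of _ a] exI[of _ b]) (auto intro: term_cl.base subst_closed simp: closed_def)
  qed
next
  case (var i)
  show ?case
    by (intro exI[of _ "lift n (Var i)"]) (simp only: subst_lift, auto intro: term_cl.var)
next
  case (lam t t')
  from lam.IH[of "Suc n"] obtain a b where "term_cl E a b" "subst (Suc n) v0 a = t" "subst (Suc n) v1 b = t'"
    by blast
  moreover have "lift 0 v0 = v0" "lift 0 v1 = v1" using c0 c1 lift_closed by (auto simp: closed_def)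
  ultimately show ?case by (intro exI[of _ "Lam a"] exI[of _ "Lam b"]) (auto intro: term_cl.lam)
next
  case (app t t' u u')
  from app.IH[of n] obtain a b c d where "term_cl E a b" "subst n v0 a = t" "subst n v1 b = t'"
    "term_cl E c d" "subst n v0 c = u" "subst n v1 d = u'" by blast
  then show ?case by (intro exI[of _ "App a c"] exI[of _ "App b d"]) (auto intro: term_cl.app)
next
  case (sft t t')
  from sft.IH[of "Suc n"] obtain a b where "term_cl E a b" "subst (Suc n) v0 a = t" "subst (Suc n) v1 b = t'"
    by blast
  moreover have "lift 0 v0 = v0" "lift 0 v1 = v1" using c0 c1 lift_closed by (auto simp: closed_def)
  ultimately show ?case by (intro exI[of _ "Shift a"] exI[of _ "Shift b"]) (auto intro: term_cl.sft)
next
  case (rst t t')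
  from rst.IH[of n] obtain a b where "term_cl E a b" "subst n v0 a = t" "subst n v1 b = t'" by blast
  then show ?case by (intro exI[of _ "Reset a"] exI[of _ "Reset b"]) (auto intro: term_cl.rst)
qed

abbreviation ev where "ev \<equiv> evals_to_value"

definition GG :: "env \<Rightarrow> trm \<Rightarrow> trm \<Rightarrow> bool" where
  "GG E t0 t1 = (\<forall>F0 F1. hat E F0 F1 \<longrightarrow> (ev (Reset (plug F0 t0)) = ev (Reset (plug F1 t1))))"

definition OK :: "env \<Rightarrow> bool" where
  "OK E = (is_env E \<and> (\<forall>s0 s1. tilde E s0 s1 \<longrightarrow> (ev (Reset s0) = ev (Reset s1))))"

lemma reds_arg: "reds p v \<Longrightarrow> is_val v \<Longrightarrow> reds (Reset (App (Lam c) p)) (Reset (subst 0 v c))"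
proof -
  assume r: "reds p v" and v: "is_val v"
  have "reds (plug (CReset (CArgR (Lam c) Hole)) p) (plug (CReset (CArgR (Lam c) Hole)) v)"
    by (rule reds_ctx[OF r]) (simp add: is_val_def)
  moreover have "red (plug (CReset Hole) (App (Lam c) v)) (plug (CReset Hole) (subst 0 v c))"
    by (rule red.beta) (use v in auto)
  ultimately show ?thesis by simp
qed

lemma envext:
  assumes G: "GG E p0 p1" and env: "is_env E" and r0: "reds p0 v0" and r1: "reds p1 v1"
    and v0: "is_val v0" and v1: "is_val v1" and c0: "closed v0" and c1: "closed v1"
  shows "OK ({(v0,v1)} \<union> E)"
  unfolding OK_def
proof (intro conjI allI impI)
  show "is_env ({(v0, v1)} \<union> E)" using env v0 v1 c0 c1 by (auto simp: is_env_def)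
next
  fix s0 s1 assume "tilde ({(v0, v1)} \<union> E) s0 s1"
  then have tc: "term_cl (insert (v0,v1) E) s0 s1" and cs: "closed s0" "closed s1" by (auto simp: tilde_def)
  obtain a b where ab: "term_cl E a b" "subst 0 v0 a = s0" "subst 0 v1 b = s1"
    using abstr[OF env c0 c1 tc, of 0] by blast
  have "closed_at 1 a" "closed_at 1 b" using closed_subst_rev[of 0 0 v0 a] closed_subst_rev[of 0 0 v1 b] ab cs
    by (auto simp: closed_def)
  then have "tilde E (Lam a) (Lam b)" using ab by (auto simp: tilde_def closed_def intro: term_cl.lam)
  then have "hat E (CArgR (Lam a) Hole) (CArgR (Lam b) Hole)" by (auto intro: hat.intros simp: is_val_def)
  from G[unfolded GG_def, rule_format, OF this]
  have "ev (Reset (App (Lam a) p0)) = ev (Reset (App (Lam b) p1))" by simp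
  moreover have "ev (Reset (App (Lam a) p0)) = ev (Reset s0)" using reds_arg[OF r0 v0, of a] ab ev_reds by blast
  moreover have "ev (Reset (App (Lam b) p1)) = ev (Reset s1)" using reds_arg[OF r1 v1, of b] ab ev_reds by blast
  ultimately show "ev (Reset s0) = ev (Reset s1)" by simp
qed


definition XX :: "envrel_elem set" where
  "XX = {Env E | E. OK E} \<union> {Tri E t0 t1 | E t0 t1. is_env E \<and> closed t0 \<and> closed t1 \<and> GG E t0 t1}"

lemma XX_Env[simp]: "(Env E \<in> XX) = OK E" by (auto simp: XX_def)
lemma XX_Tri[simp]: "(Tri E t0 t1 \<in> XX) = (is_env E \<and> closed t0 \<and> closed t1 \<and> GG E t0 t1)"
  by (auto simp: XX_def)

lemma GG_stepL: "GG E p0 p1 \<Longrightarrow> red p0 p0' \<Longrightarrow> GG E p0' p1"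
  unfolding GG_def
proof (intro allI impI)
  fix F0 F1 assume G: "\<forall>F0 F1. hat E F0 F1 \<longrightarrow> ev (Reset (plug F0 p0)) = ev (Reset (plug F1 p1))"
    and r: "red p0 p0'" and h: "hat E F0 F1"
  have "red (plug (CReset F0) p0) (plug (CReset F0) p0')"
    using red_ctx[OF r, of "CReset F0"] hat_props[OF h] by simp
  then have "ev (Reset (plug F0 p0)) = ev (Reset (plug F0 p0'))" by (metis ev_reds plug.simps(4) r_into_rtranclp)
  with G h show "ev (Reset (plug F0 p0')) = ev (Reset (plug F1 p1))" by auto
qed

lemma GG_stepR: "GG E p0 p1 \<Longrightarrow> red p1 p1' \<Longrightarrow> GG E p0 p1'"
  unfolding GG_def
proof (intro allI impI)
  fix F0 F1 assume G: "\<forall>F0 F1. hat E F0 F1 \<longrightarrow> ev (Reset (plug F0 p0)) = ev (Reset (plug F1 p1))"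
    and r: "red p1 p1'" and h: "hat E F0 F1"
  have "red (plug (CReset F1) p1) (plug (CReset F1) p1')"
    using red_ctx[OF r, of "CReset F1"] hat_props[OF h] by simp
  then have "ev (Reset (plug F1 p1)) = ev (Reset (plug F1 p1'))" by (metis ev_reds plug.simps(4) r_into_rtranclp)
  with G h show "ev (Reset (plug F0 p0)) = ev (Reset (plug F1 p1'))" by auto
qed

lemma ev_red_val: "red p v \<Longrightarrow> is_val v \<Longrightarrow> ev (Reset p)"
proof -
  assume r: "red p v" and v: "is_val v"
  have "red (plug (CReset Hole) p) (plug (CReset Hole) v)" using red_ctx[OF r, of "CReset Hole"] by simp
  moreover have "red (plug Hole (Reset v)) (plug Hole v)" by (rule red.reset) (use v in auto)
  ultimately have "reds (Reset p) v" by auto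
  then show ?thesis using v val_irred unfolding evals_to_value_def evals_def by blast
qed

lemma GG_hole: "GG E p0 p1 \<Longrightarrow> ev (Reset p0) = ev (Reset p1)"
  unfolding GG_def using hat.hole by fastforce

theorem XX_bisim: "env_bisim_p XX"
  unfolding env_bisim_p_def
proof (intro conjI)
  show "env_rel XX" unfolding env_rel_def by (auto simp: OK_def)
next
  show "\<forall>E t0 t1. Tri E t0 t1 \<in> XX \<and> \<not> (is_prog t0 \<and> is_prog t1) \<longrightarrow>
       (\<forall>E0 E1. pure E0 \<and> pure E1 \<and> hat E E0 E1 \<longrightarrow>
          Tri E (Reset (plug E0 t0)) (Reset (plug E1 t1)) \<in> XX)"
  proof (intro allI impI)
    fix E t0 t1 E0 E1
    assume a: "Tri E t0 t1 \<in> XX \<and> \<not> (is_prog t0 \<and> is_prog t1)" and b: "pure E0 \<and> pure E1 \<and> hat E E0 E1"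
    then have G: "GG E t0 t1" and env: "is_env E" and c: "closed t0" "closed t1" by auto
    have h: "hat E E0 E1" using b by auto
    have "GG E (Reset (plug E0 t0)) (Reset (plug E1 t1))"
      unfolding GG_def
    proof (intro allI impI)
      fix F0 F1 assume "hat E F0 F1"
      then have "hat E (comp F0 (CReset E0)) (comp F1 (CReset E1))"
        using hat_comp h hat.rst by blast
      from G[unfolded GG_def, rule_format, OF this]
      show "ev (Reset (plug F0 (Reset (plug E0 t0)))) = ev (Reset (plug F1 (Reset (plug E1 t1))))"
        by (simp add: plug_comp)
    qed
    moreover have "closed (Reset (plug E0 t0))" "closed (Reset (plug E1 t1))"
      using hat_props[OF h] c by (auto simp: closed_def closed_plug)
    ultimately show "Tri E (Reset (plug E0 t0)) (Reset (plug E1 t1)) \<in> XX" using env by simp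
  qed
next
  show "\<forall>E p0 p1. Tri E p0 p1 \<in> XX \<and> is_prog p0 \<and> is_prog p1 \<longrightarrow>
       (\<forall>p0'. red p0 p0' \<and> is_prog p0' \<longrightarrow>
          (\<exists>p1'. reds p1 p1' \<and> is_prog p1' \<and> Tri E p0' p1' \<in> XX)) \<and>
       (\<forall>v0. red p0 v0 \<and> is_val v0 \<longrightarrow>
          (\<exists>v1. reds p1 v1 \<and> is_val v1 \<and> Env ({(v0, v1)} \<union> E) \<in> XX)) \<and>
       (\<forall>p1'. red p1 p1' \<and> is_prog p1' \<longrightarrow>
          (\<exists>p0'. reds p0 p0' \<and> is_prog p0' \<and> Tri E p0' p1' \<in> XX)) \<and>
       (\<forall>v1. red p1 v1 \<and> is_val v1 \<longrightarrow>
          (\<exists>v0. reds p0 v0 \<and> is_val v0 \<and> Env ({(v0, v1)} \<union> E) \<in> XX))"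
  proof (intro allI impI conjI)
    fix E p0 p1 assume a: "Tri E p0 p1 \<in> XX \<and> is_prog p0 \<and> is_prog p1"
    then have G: "GG E p0 p1" and env: "is_env E" and c: "closed p0" "closed p1"
      and pp: "is_prog p0" "is_prog p1" by auto
    {
      fix p0' assume "red p0 p0' \<and> is_prog p0'"
      then show "\<exists>p1'. reds p1 p1' \<and> is_prog p1' \<and> Tri E p0' p1' \<in> XX"
        using GG_stepL[OF G] red_closed c env pp by (intro exI[of _ p1]) auto
    next
      fix p1' assume "red p1 p1' \<and> is_prog p1'"
      then show "\<exists>p0'. reds p0 p0' \<and> is_prog p0' \<and> Tri E p0' p1' \<in> XX"
        using GG_stepR[OF G] red_closed c env pp by (intro exI[of _ p0]) auto
    next
      fix v0 assume r: "red p0 v0 \<and> is_val v0"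
      then have "ev (Reset p1)" using ev_red_val GG_hole[OF G] by blast
      then obtain v1 where r1: "reds p1 v1" "is_val v1" using ev_prog pp by blast
      have "OK ({(v0, v1)} \<union> E)"
        by (rule envext[OF G env]) (use r r1 c red_closed reds_closed in auto)
      then show "\<exists>v1. reds p1 v1 \<and> is_val v1 \<and> Env ({(v0, v1)} \<union> E) \<in> XX" using r1 by auto
    next
      fix v1 assume r: "red p1 v1 \<and> is_val v1"
      then have "ev (Reset p0)" using ev_red_val GG_hole[OF G] by blast
      then obtain v0 where r0: "reds p0 v0" "is_val v0" using ev_prog pp by blast
      have "OK ({(v0, v1)} \<union> E)"
        by (rule envext[OF G env]) (use r r0 c red_closed reds_closed in auto)
      then show "\<exists>v0. reds p0 v0 \<and> is_val v0 \<and> Env ({(v0, v1)} \<union> E) \<in> XX" using r0 by auto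
    }
  qed
next
  show "\<forall>E t0 t1 v0 v1. Env E \<in> XX \<and> (Lam t0, Lam t1) \<in> E \<and>
        is_val v0 \<and> is_val v1 \<and> tilde E v0 v1 \<longrightarrow>
       Tri E (subst 0 v0 t0) (subst 0 v1 t1) \<in> XX"
  proof (intro allI impI)
    fix E t0 t1 v0 v1
    assume a: "Env E \<in> XX \<and> (Lam t0, Lam t1) \<in> E \<and> is_val v0 \<and> is_val v1 \<and> tilde E v0 v1"
    then have ok: "OK E" and env: "is_env E" and inE: "(Lam t0, Lam t1) \<in> E"
      and vv: "is_val v0" "is_val v1" and tv: "tilde E v0 v1" by (auto simp: OK_def)
    have cl: "closed (Lam t0)" "closed (Lam t1)" using env inE by (auto simp: is_env_def)
    have cv: "closed v0" "closed v1" using tv by (auto simp: tilde_def)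
    have tapp: "tilde E (App (Lam t0) v0) (App (Lam t1) v1)"
      using tv inE cl cv by (auto simp: tilde_def closed_def intro: term_cl.intros)
    have "GG E (subst 0 v0 t0) (subst 0 v1 t1)"
      unfolding GG_def
    proof (intro allI impI)
      fix F0 F1 assume h: "hat E F0 F1"
      have "ev (Reset (plug F0 (App (Lam t0) v0))) = ev (Reset (plug F1 (App (Lam t1) v1)))"
        using ok hat_plug[OF h tapp] by (auto simp: OK_def)
      moreover have "red (plug (CReset F0) (App (Lam t0) v0)) (plug (CReset F0) (subst 0 v0 t0))"
        by (rule red.beta) (use hat_props[OF h] vv in auto)
      moreover have "red (plug (CReset F1) (App (Lam t1) v1)) (plug (CReset F1) (subst 0 v1 t1))"
        by (rule red.beta) (use hat_props[OF h] vv in auto)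
      ultimately show "ev (Reset (plug F0 (subst 0 v0 t0))) = ev (Reset (plug F1 (subst 0 v1 t1)))"
        using ev_reds by (metis plug.simps(4) r_into_rtranclp)
    qed
    moreover have "closed (subst 0 v0 t0)" "closed (subst 0 v1 t1)"
      using cl cv closed_subst[of 0 t0 0 v0] closed_subst[of 0 t1 0 v1] by (auto simp: closed_def)
    ultimately show "Tri E (subst 0 v0 t0) (subst 0 v1 t1) \<in> XX" using env by simp
  qed
qed

theorem lemma17:
  fixes t0 t1 :: trm
  assumes "closed t0" and "closed t1"
    and "ctx_equiv_p t0 t1"
  shows "bisim_p {} t0 t1"
proof -
  have "GG {} t0 t1" unfolding GG_def
  proof (intro allI impI)
    fix F0 F1 assume h: "hat {} F0 F1"
    then have "F0 = F1" by (rule hat_empty)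
    moreover have "evctx F0" "closed_ctx F0" using hat_props[OF h] by (auto simp: cca0)
    ultimately show "ev (Reset (plug F0 t0)) = ev (Reset (plug F1 t1))"
      using assms(3) unfolding ctx_equiv_p_def by blast
  qed
  then have "Tri {} t0 t1 \<in> XX" using assms by (simp add: is_env_def)
  then show ?thesis using XX_bisim unfolding bisim_p_def env_bisimilar_p_def by blast
qed

end
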